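(* For any qubit state $\rho$ (density matrix on $\mathbb{C}^2$), $$F_c(\rho)=\frac{1}{2}+\frac{1}{2}\,C_{\mathcal{R}}(\rho).$$
   Context: Coherence is taken with respect to the computational basis $\{|0\rangle,|1\rangle\}$; incoherent states are those diagonal in this basis, forming the set $\mathcal{I}$. The set of maximally coherent qubit states is $\mathcal{M}=\{\frac{1}{\sqrt2}(e^{\mathfrak{i}\theta_0}|0\rangle+e^{\mathfrak{i}\theta_1}|1\rangle):\theta_0,\theta_1\in[0,2\pi]\}$, and the coherence fraction is $F_c(\rho)=\max_{|\phi\rangle\in\mathcal{M}}\langle\phi|\rho|\phi\rangle$. The robustness of coherence is $C_{\mathcal{R}}(\rho)=\min_{\tau}\{s\ge 0: \frac{\rho+s\tau}{1+s}\in\mathcal{I}\}$, where the minimum is over all states $\tau$. *)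

theory Defs
  imports Complex_Main "Jordan_Normal_Form.Schur_Decomposition"
begin

(* Matrices are Jordan_Normal_Form matrices; index 0 corresponds to |0>, index 1 to |1>. *)

definition expval :: "complex mat \<Rightarrow> complex vec \<Rightarrow> complex" where
  "expval A v = (\<Sum>i<dim_vec v. \<Sum>j<dim_vec v. cnj (v $ i) * A $$ (i, j) * v $ j)"

definition density_matrix :: "nat \<Rightarrow> complex mat \<Rightarrow> bool" where
  "density_matrix n \<rho> \<longleftrightarrow> \<rho> \<in> carrier_mat n n \<and> mat_adjoint \<rho> = \<rho> \<and>
     (\<forall>v \<in> carrier_vec n. 0 \<le> Re (expval \<rho> v)) \<and> (\<Sum>i<n. \<rho> $$ (i, i)) = 1"

definition qubit_state :: "complex mat \<Rightarrow> bool" where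
  "qubit_state \<rho> \<longleftrightarrow> density_matrix 2 \<rho>"

definition incoherent :: "complex mat \<Rightarrow> bool" where
  "incoherent \<delta> \<longleftrightarrow> qubit_state \<delta> \<and> diagonal_mat \<delta>"

definition max_coh_vec :: "real \<Rightarrow> real \<Rightarrow> complex vec" where
  "max_coh_vec t0 t1 = vec 2 (\<lambda>i. (if i = 0 then cis t0 else cis t1) / complex_of_real (sqrt 2))"

definition max_coherent_states :: "complex vec set" where
  "max_coherent_states = {max_coh_vec t0 t1 | t0 t1. t0 \<in> {0..2*pi} \<and> t1 \<in> {0..2*pi}}"

text \<open>Coherence fraction F_c(rho) = max over maximally coherent phi of <phi|rho|phi>
  (a real number for Hermitian rho; the maximum is attained, so it equals the supremum).\<close>
definition coherence_fraction :: "complex mat \<Rightarrow> real" where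
  "coherence_fraction \<rho> = (SUP \<phi>\<in>max_coherent_states. Re (expval \<rho> \<phi>))"

definition robustness_coherence :: "complex mat \<Rightarrow> real" where
  "robustness_coherence \<rho> = Inf {s::real. 0 \<le> s \<and> (\<exists>\<tau>. qubit_state \<tau> \<and>
      incoherent (complex_of_real (1 / (1 + s)) \<cdot>\<^sub>m (\<rho> + complex_of_real s \<cdot>\<^sub>m \<tau>)))}"

end

theory Submission
  imports Defs
begin

lemma adj_entry: assumes "A \<in> carrier_mat n n" "i < n" "j < n"
  shows "mat_adjoint A $$ (i,j) = cnj (A $$ (j,i))"
  using assms unfolding mat_adjoint_def by (simp add: mat_of_rows_index)

lemma expval2: assumes "v \<in> carrier_vec 2"
  shows "expval M v = cnj(v$0)*M$$(0,0)*v$0 + cnj(v$0)*M$$(0,1)*v$1 + cnj(v$1)*M$$(1,0)*v$0 + cnj(v$1)*M$$(1,1)*v$1"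
  using assms unfolding expval_def by (simp add: numeral_2_eq_2 lessThan_Suc)

lemma less2: "(i::nat) < 2 \<Longrightarrow> i = 0 \<or> i = 1" by auto

lemma quad_ineq:
  fixes p q B X Y :: real
  assumes "p \<ge> 0" "q \<ge> 0" "B^2 \<le> p*q" "B \<ge> 0"
  shows "p*X^2 + q*Y^2 - 2*B*\<bar>X\<bar>*\<bar>Y\<bar> \<ge> 0"
proof (cases "p = 0")
  case True
  then have "B = 0" using assms by (auto simp add: power2_eq_square mult_le_0_iff)
  then show ?thesis using assms True by simp
next
  case False
  then have pp: "p > 0" using assms by simp
  have "p*(p*X^2 + q*Y^2 - 2*B*\<bar>X\<bar>*\<bar>Y\<bar>) = (p*\<bar>X\<bar> - B*\<bar>Y\<bar>)^2 + (p*q - B^2)*Y^2"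
    by (simp add: power2_eq_square algebra_simps)
  also have "\<dots> \<ge> 0" using assms by simp
  finally show ?thesis using pp by (simp add: zero_le_mult_iff)
qed

lemma qubit_from_entries:
  fixes p q :: real and b :: complex
  assumes M: "M \<in> carrier_mat 2 2" and e00: "M$$(0,0) = of_real p" and e11: "M$$(1,1) = of_real q"
    and e01: "M$$(0,1) = b" and e10: "M$$(1,0) = cnj b"
    and pq: "p \<ge> 0" "q \<ge> 0" "(cmod b)^2 \<le> p*q" "p + q = 1"
  shows "qubit_state M"
  unfolding qubit_state_def density_matrix_def
proof (intro conjI ballI)
  show "M \<in> carrier_mat 2 2" by fact
  show "mat_adjoint M = M"
  proof (rule eq_matI)
    fix i j assume "i < dim_row M" "j < dim_col M"
    then have ij: "i < 2" "j < 2" using M by auto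
    then show "mat_adjoint M $$ (i, j) = M $$ (i, j)"
      using adj_entry[OF M ij] less2[OF ij(1)] less2[OF ij(2)] e00 e11 e01 e10 by auto
  qed (use M in \<open>auto simp: mat_adjoint_def\<close>)
  show "(\<Sum>i<2. M $$ (i, i)) = 1"
    using e00 e11 pq(4) by (simp add: numeral_2_eq_2 lessThan_Suc flip: of_real_add)
  fix v :: "complex vec" assume v: "v \<in> carrier_vec 2"
  define x where "x = v$0"
  define y where "y = v$1"
  have "Re (expval M v) = p * (cmod x)^2 + q * (cmod y)^2 + 2 * Re (cnj x * b * y)"
  proof -
    have "expval M v = of_real p * (cnj x * x) + of_real q * (cnj y * y) + (cnj x * b * y + cnj (cnj x * b * y))"
      unfolding expval2[OF v] x_def y_def e00 e11 e01 e10 by (simp add: algebra_simps)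
    then show ?thesis by (simp add: complex_norm_square[symmetric] mult.commute[of "cnj _"]) (simp add: algebra_simps)
  qed
  moreover have "Re (cnj x * b * y) \<ge> - (cmod b * cmod x * cmod y)"
  proof -
    have "\<bar>Re (cnj x * b * y)\<bar> \<le> cmod (cnj x * b * y)" by (rule abs_Re_le_cmod)
    also have "\<dots> = cmod b * cmod x * cmod y" by (simp add: norm_mult)
    finally show ?thesis by linarith
  qed
  moreover have "p * (cmod x)^2 + q * (cmod y)^2 - 2 * cmod b * \<bar>cmod x\<bar> * \<bar>cmod y\<bar> \<ge> 0"
    by (rule quad_ineq) (use pq in auto)
  ultimately show "0 \<le> Re (expval M v)" by simp
qed

lemma rho_struct:
  assumes "qubit_state \<rho>"
  shows "\<rho> \<in> carrier_mat 2 2" "\<rho>$$(1,0) = cnj (\<rho>$$(0,1))"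
    "\<rho>$$(0,0) = of_real (Re (\<rho>$$(0,0)))" "\<rho>$$(1,1) = of_real (Re (\<rho>$$(1,1)))"
    "Re (\<rho>$$(0,0)) + Re (\<rho>$$(1,1)) = 1" "Re (\<rho>$$(0,0)) \<ge> 0" "Re (\<rho>$$(1,1)) \<ge> 0"
proof -
  have C: "\<rho> \<in> carrier_mat 2 2" and A: "mat_adjoint \<rho> = \<rho>"
    and P: "\<And>v. v \<in> carrier_vec 2 \<Longrightarrow> 0 \<le> Re (expval \<rho> v)"
    and T: "(\<Sum>i<2. \<rho> $$ (i, i)) = 1"
    using assms unfolding qubit_state_def density_matrix_def by auto
  show "\<rho> \<in> carrier_mat 2 2" by fact
  have "\<rho>$$(1,0) = mat_adjoint \<rho> $$ (1,0)" using A by simp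
  then show "\<rho>$$(1,0) = cnj (\<rho>$$(0,1))" using adj_entry[OF C, of 1 0] by simp
  have "\<rho>$$(0,0) = mat_adjoint \<rho> $$ (0,0)" using A by simp
  then have "\<rho>$$(0,0) = cnj (\<rho>$$(0,0))" using adj_entry[OF C, of 0 0] by simp
  then show "\<rho>$$(0,0) = of_real (Re (\<rho>$$(0,0)))" by (metis Reals_cnj_iff complex_is_Real_iff of_real_Re)
  have "\<rho>$$(1,1) = mat_adjoint \<rho> $$ (1,1)" using A by simp
  then have "\<rho>$$(1,1) = cnj (\<rho>$$(1,1))" using adj_entry[OF C, of 1 1] by simp
  then show "\<rho>$$(1,1) = of_real (Re (\<rho>$$(1,1)))" by (metis Reals_cnj_iff complex_is_Real_iff of_real_Re)
  have "\<rho>$$(0,0) + \<rho>$$(1,1) = 1" using T by (simp add: numeral_2_eq_2 lessThan_Suc add.commute)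
  then show "Re (\<rho>$$(0,0)) + Re (\<rho>$$(1,1)) = 1" by (metis one_complex.simps(1) plus_complex.simps(1))
  have "0 \<le> Re (expval \<rho> (vec 2 (\<lambda>i. if i = 0 then 1 else 0)))" by (rule P) simp
  then show "Re (\<rho>$$(0,0)) \<ge> 0" by (subst (asm) expval2) auto
  have "0 \<le> Re (expval \<rho> (vec 2 (\<lambda>i. if i = 0 then 0 else 1)))" by (rule P) simp
  then show "Re (\<rho>$$(1,1)) \<ge> 0" by (subst (asm) expval2) auto
qed

lemma offdiag_bound:
  assumes "qubit_state \<tau>"
  shows "cmod (\<tau>$$(0,1)) \<le> 1/2"
proof (cases "\<tau>$$(0,1) = 0")
  case True then show ?thesis by simp
next
  case False
  define b where "b = \<tau>$$(0,1)"
  have bn: "cmod b > 0" using False b_def by simp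
  note S = rho_struct[OF assms]
  have P: "\<And>v. v \<in> carrier_vec 2 \<Longrightarrow> 0 \<le> Re (expval \<tau> v)"
    using assms unfolding qubit_state_def density_matrix_def by auto
  define y where "y = - cnj b / of_real (cmod b)"
  define v where "v = vec 2 (\<lambda>i. if i = 0 then 1 else y)"
  have v: "v \<in> carrier_vec 2" unfolding v_def by simp
  have nb: "b * cnj b = of_real (cmod b) * of_real (cmod b)"
    using complex_norm_square[of b] by (simp add: power2_eq_square)
  have by1: "b * y = - of_real (cmod b)"
    unfolding y_def using bn nb by (simp add: field_simps)
  have by2: "cnj y * cnj b = - of_real (cmod b)"
    unfolding y_def using bn nb by (simp add: field_simps mult.commute)
  have by3: "cnj y * y = 1"
    unfolding y_def using bn nb by (simp add: field_simps mult.commute)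
  have v0: "v$0 = 1" "v$1 = y" by (simp_all add: v_def)
  have "expval \<tau> v = \<tau>$$(0,0) + b * y + cnj y * cnj b + (cnj y * y) * \<tau>$$(1,1)"
    unfolding expval2[OF v] v0 S(2) b_def[symmetric] by (simp add: algebra_simps)
  also have "\<dots> = \<tau>$$(0,0) + \<tau>$$(1,1) - 2 * of_real (cmod b)"
    unfolding by1 by2 by3 by simp
  finally have "expval \<tau> v = \<tau>$$(0,0) + \<tau>$$(1,1) - 2 * of_real (cmod b)" .
  then have "Re (expval \<tau> v) = 1 - 2 * cmod b" using S(5) by simp
  then show ?thesis using P[OF v] b_def by simp
qed

lemma expval_mc:
  assumes "qubit_state \<rho>"
  shows "Re (expval \<rho> (max_coh_vec t0 t1)) = 1/2 + Re (\<rho>$$(0,1) * cis (t1 - t0))"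
proof -
  note S = rho_struct[OF assms]
  define c where "c = \<rho>$$(0,1)"
  have v: "max_coh_vec t0 t1 \<in> carrier_vec 2" unfolding max_coh_vec_def by simp
  have s2: "cnj (complex_of_real (sqrt 2)) * complex_of_real (sqrt 2) = 2"
    by (simp flip: of_real_mult)
  have e1: "cnj (cis t0) * cis t1 = cis (t1 - t0)" by (simp add: cis_cnj cis_mult)
  have e2: "cnj (cis t1) * cis t0 = cnj (cis (t1 - t0))" by (simp add: cis_cnj cis_mult)
  have e3: "cnj (cis t0) * cis t0 = 1" "cnj (cis t1) * cis t1 = 1" by (simp_all add: cis_cnj cis_mult)
  define r where "r = complex_of_real (sqrt 2)"
  have r: "cnj r = r" "r * r = 2" "r \<noteq> 0" unfolding r_def by (simp_all flip: of_real_mult)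
  have v0: "max_coh_vec t0 t1 $ 0 = cis t0 / r" "max_coh_vec t0 t1 $ 1 = cis t1 / r"
    by (simp_all add: max_coh_vec_def r_def)
  have "expval \<rho> (max_coh_vec t0 t1) = ((cnj (cis t0) * cis t0) * \<rho>$$(0,0) + (cnj (cis t0) * cis t1) * c
     + (cnj (cis t1) * cis t0) * cnj c + (cnj (cis t1) * cis t1) * \<rho>$$(1,1)) / (r * r)"
    unfolding expval2[OF v] v0 S(2) c_def[symmetric] using r by (simp add: field_simps)
  also have "\<dots> = (\<rho>$$(0,0) + \<rho>$$(1,1)) / 2 + (c * cis (t1 - t0) + cnj (c * cis (t1 - t0))) / 2"
    unfolding e1 e2 e3 r by (simp add: cis_cnj[symmetric] algebra_simps add_divide_distrib)
  finally have "expval \<rho> (max_coh_vec t0 t1) = (\<rho>$$(0,0) + \<rho>$$(1,1)) / 2 + (c * cis (t1 - t0) + cnj (c * cis (t1 - t0))) / 2" .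
  then show ?thesis using S(5) c_def by simp
qed


lemma cf_value:
  assumes "qubit_state \<rho>"
  shows "coherence_fraction \<rho> = 1/2 + cmod (\<rho>$$(0,1))"
  unfolding coherence_fraction_def
proof (rule cSup_eq_maximum)
  define c where "c = \<rho>$$(0,1)"
  have r1: "rcis (cmod c) (Arg c) * cis (- Arg c) = of_real (cmod c)"
    by (simp add: rcis_def cis_mult mult.assoc)
  have key: "Re (c * cis (- Arg c)) = cmod c"
    using r1 rcis_cmod_Arg[of c] by simp
  obtain t0 t1 where t: "t0 \<in> {0..2*pi}" "t1 \<in> {0..2*pi}" "t1 - t0 = - Arg c"
  proof (cases "Arg c \<le> 0")
    case True
    then show ?thesis using Arg_bounded[of c] by (intro that[of 0 "- Arg c"]) auto
  next
    case False
    then show ?thesis using Arg_bounded[of c] by (intro that[of "Arg c" 0]) auto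
  qed
  have mem: "max_coh_vec t0 t1 \<in> max_coherent_states"
    unfolding max_coherent_states_def using t by blast
  show "1/2 + cmod (\<rho>$$(0,1)) \<in> (\<lambda>\<phi>. Re (expval \<rho> \<phi>)) ` max_coherent_states"
    proof (rule image_eqI[OF _ mem])
    show "1/2 + cmod (\<rho>$$(0,1)) = Re (expval \<rho> (max_coh_vec t0 t1))"
      by (metis expval_mc[OF assms] c_def t(3) key)
  qed
  fix x assume "x \<in> (\<lambda>\<phi>. Re (expval \<rho> \<phi>)) ` max_coherent_states"
  then obtain u0 u1 where x: "x = Re (expval \<rho> (max_coh_vec u0 u1))"
    unfolding max_coherent_states_def by blast
  have "Re (\<rho>$$(0,1) * cis (u1 - u0)) \<le> cmod (\<rho>$$(0,1) * cis (u1 - u0))"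
    by (rule complex_Re_le_cmod)
  also have "\<dots> = cmod (\<rho>$$(0,1))" by (simp add: norm_mult)
  finally show "x \<le> 1/2 + cmod (\<rho>$$(0,1))" using x expval_mc[OF assms] by simp
qed

lemma rc_value:
  assumes "qubit_state \<rho>"
  shows "robustness_coherence \<rho> = 2 * cmod (\<rho>$$(0,1))"
  unfolding robustness_coherence_def
proof (rule cInf_eq_minimum)
  note S = rho_struct[OF assms]
  define c where "c = \<rho>$$(0,1)"
  define a where "a = Re (\<rho>$$(0,0))"
  define d where "d = Re (\<rho>$$(1,1))"
  define s where "s = 2 * cmod c"
  define b where "b = - c / of_real s"
  have s0: "s \<ge> 0" unfolding s_def by simp
  have cb: "c + of_real s * b = 0"
    by (cases "c = 0") (auto simp: b_def s_def)
  have bb: "(cmod b)^2 \<le> 1/2 * (1/2)"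
  proof (cases "c = 0")
    case True then show ?thesis by (simp add: b_def)
  next
    case False
    then have h: "cmod b = 1/2" unfolding b_def s_def by (simp add: norm_divide)
    show ?thesis unfolding h by (simp add: power2_eq_square)
  qed
  define \<tau> where "\<tau> = mat 2 2 (\<lambda>(i,j). if i = j then 1/2 else if i = 0 then b else cnj b)"
  have tq: "qubit_state \<tau>"
    by (rule qubit_from_entries[where p = "1/2" and q = "1/2" and b = b]) (use bb in \<open>simp_all add: \<tau>_def\<close>)
  define C where "C = complex_of_real (1 / (1 + s)) \<cdot>\<^sub>m (\<rho> + complex_of_real s \<cdot>\<^sub>m \<tau>)"
  have Cc: "C \<in> carrier_mat 2 2" unfolding C_def \<tau>_def using S(1) by auto
  have C00: "C$$(0,0) = of_real ((a + s/2) / (1 + s))"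
    unfolding C_def \<tau>_def a_def using S(1) apply (subst S(3)) apply (simp add: field_simps) using S(3) by blast
  have C11: "C$$(1,1) = of_real ((d + s/2) / (1 + s))"
    unfolding C_def \<tau>_def d_def using S(1) apply (subst S(4)) apply (simp add: field_simps) using S(4) by (metis One_nat_def)
  have C01: "C$$(0,1) = 0"
    unfolding C_def \<tau>_def using S(1) cb by (simp add: c_def)
  have cb': "cnj c + of_real s * cnj b = 0" using arg_cong[OF cb, of cnj] by simp
  have C10: "C$$(1,0) = 0"
    unfolding C_def \<tau>_def using S(1) S(2) cb' by (simp add: c_def)
  have ad: "a + d = 1" "a \<ge> 0" "d \<ge> 0" unfolding a_def d_def using S(5-7) by (simp_all add: One_nat_def)
  note a0 = ad(2) and d0 = ad(3) and ad = ad(1)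
  have pq1: "(a + s/2)/(1+s) + (d + s/2)/(1+s) = 1"
  proof -
    have "(a + s/2)/(1+s) + (d + s/2)/(1+s) = (a + d + s)/(1+s)"
      using s0 by (simp add: divide_simps) (simp add: algebra_simps)
    then show ?thesis using ad s0 by simp
  qed
  have Cq: "qubit_state C"
    by (rule qubit_from_entries[OF Cc C00 C11 C01]) (use C10 pq1 a0 d0 s0 in \<open>simp_all\<close>)
  have Cd: "diagonal_mat C"
    unfolding diagonal_mat_def
  proof (intro allI impI)
    fix i j assume "i < dim_row C" "j < dim_col C" "i \<noteq> j"
    then have "i < 2" "j < 2" "i \<noteq> j" using Cc by auto
    then have "(i = 0 \<and> j = 1) \<or> (i = 1 \<and> j = 0)" using less2 by blast
    then show "C $$ (i, j) = 0" using C01 C10 by auto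
  qed
  show "2 * cmod (\<rho>$$(0,1)) \<in> {s. 0 \<le> s \<and> (\<exists>\<tau>. qubit_state \<tau> \<and>
      incoherent (complex_of_real (1 / (1 + s)) \<cdot>\<^sub>m (\<rho> + complex_of_real s \<cdot>\<^sub>m \<tau>)))}"
    using s0 tq Cq Cd unfolding incoherent_def C_def s_def c_def by blast
next
  note S = rho_struct[OF assms]
  fix s assume "s \<in> {s. 0 \<le> s \<and> (\<exists>\<tau>. qubit_state \<tau> \<and>
      incoherent (complex_of_real (1 / (1 + s)) \<cdot>\<^sub>m (\<rho> + complex_of_real s \<cdot>\<^sub>m \<tau>)))}"
  then obtain \<tau> where s0: "s \<ge> 0" and tq: "qubit_state \<tau>"
    and inc: "incoherent (complex_of_real (1 / (1 + s)) \<cdot>\<^sub>m (\<rho> + complex_of_real s \<cdot>\<^sub>m \<tau>))" by blast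
  have tc: "\<tau> \<in> carrier_mat 2 2" using rho_struct(1)[OF tq] .
  have "(complex_of_real (1 / (1 + s)) \<cdot>\<^sub>m (\<rho> + complex_of_real s \<cdot>\<^sub>m \<tau>)) $$ (0,1) = 0"
    using inc S(1) tc unfolding incoherent_def diagonal_mat_def by auto
  then have "complex_of_real (1 / (1 + s)) * (\<rho>$$(0,1) + complex_of_real s * \<tau>$$(0,1)) = 0"
    using S(1) tc by simp
  moreover have "complex_of_real (1 / (1 + s)) \<noteq> 0" using s0 by (simp only: of_real_eq_0_iff) simp
  ultimately have "\<rho>$$(0,1) + complex_of_real s * \<tau>$$(0,1) = 0" by simp
  then have "\<rho>$$(0,1) = - (complex_of_real s * \<tau>$$(0,1))"
    by (simp add: add_eq_0_iff)
  then have "cmod (\<rho>$$(0,1)) = s * cmod (\<tau>$$(0,1))" using s0 by (simp add: norm_mult)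
  also have "\<dots> \<le> s * (1/2)" using offdiag_bound[OF tq] s0 by (intro mult_left_mono) auto
  finally show "2 * cmod (\<rho>$$(0,1)) \<le> s" by simp
qed

theorem mainTheorem2:
  fixes \<rho> :: "complex mat"
  assumes "qubit_state \<rho>"
  shows "coherence_fraction \<rho> = 1/2 + 1/2 * robustness_coherence \<rho>"
  using cf_value[OF assms] rc_value[OF assms] by simp

end
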